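(* Let $p\in(1,2]$, let $u$ be an ancient solution of the half-space problem $u_t-\Delta u=|\nabla u|^p$ in $\mathbb{R}^n_+\times(-\infty,0)$, $u=0$ on $\partial\mathbb{R}^n_+\times(-\infty,0)$, let $\varepsilon>0$ and assume $$M_1:=\sup_{\Gamma_1\times(-\infty,-\varepsilon]}|u|<\infty.$$ Then there is $C=C(n,p,M_1)>0$ such that $|u(x,t)|\le C x_n$ for all $(x,t)\in\Gamma_1\times(-\infty,-\varepsilon]$.
   Context: $\mathbb{R}^n_+:=\{x\in\mathbb{R}^n: x_n>0\}$, $\Gamma_R:=\{x\in\mathbb{R}^n: 0<x_n<R\}$. An ancient solution of the half-space problem is a function $u\in C^{2,1}(Q)\cap C(\overline Q)$, $Q=\mathbb{R}^n_+\times(-\infty,0)$, satisfying the PDE pointwise in $Q$ and $u=0$ pointwise on $\partial\mathbb{R}^n_+\times(-\infty,0)$. *)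

theory Defs
  imports "HOL-Analysis.Analysis"
begin

text \<open>Points of R^n are vectors real^'n; the distinguished "normal" coordinate x_n
  is the coordinate k :: 'n. Time is a separate real variable.\<close>

definition halfspace :: "'n::finite \<Rightarrow> (real^'n) set" where
  "halfspace k = {x. x $ k > 0}"

definition Gamma :: "'n::finite \<Rightarrow> real \<Rightarrow> (real^'n) set" where
  "Gamma k R = {x. 0 < x $ k \<and> x $ k < R}"

definition Qset :: "'n::finite \<Rightarrow> ((real^'n) \<times> real) set" where
  "Qset k = halfspace k \<times> {..<0}"

text \<open>Ancient solution of u_t - Laplace u = |grad u|^p in the half space
  with zero boundary values: u in C^{2,1}(Q) \<inter> C(closure Q).
  ut is the time derivative, Du the spatial gradient, D2 the spatial Hessian
  (row i of D2 is the gradient of the i-th component of Du).\<close>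

definition ancient_sol :: "'n::finite \<Rightarrow> real \<Rightarrow> ((real^'n) \<Rightarrow> real \<Rightarrow> real) \<Rightarrow> bool" where
  "ancient_sol k p u \<longleftrightarrow>
     continuous_on (closure (Qset k)) (\<lambda>(x,t). u x t) \<and>
     (\<exists>ut Du D2.
        continuous_on (Qset k) (\<lambda>(x,t). ut x t) \<and>
        continuous_on (Qset k) (\<lambda>(x,t). Du x t :: real^'n) \<and>
        continuous_on (Qset k) (\<lambda>(x,t). D2 x t :: real^'n^'n) \<and>
        (\<forall>x t. (x,t) \<in> Qset k \<longrightarrow>
           ((\<lambda>s. u x s) has_real_derivative ut x t) (at t) \<and>
           ((\<lambda>y. u y t) has_derivative (\<lambda>h. Du x t \<bullet> h)) (at x) \<and>
           ((\<lambda>y. Du y t) has_derivative (\<lambda>h. D2 x t *v h)) (at x) \<and>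
           ut x t - (\<Sum>i\<in>UNIV. D2 x t $ i $ i) = norm (Du x t) powr p)) \<and>
     (\<forall>x t. x $ k = 0 \<and> t < 0 \<longrightarrow> u x t = 0)"

end

theory Submission
  imports Defs
begin


lemma second_order_1d:
  fixes g g' :: "real \<Rightarrow> real"
  assumes e: "e > 0" and dg: "\<forall>s. \<bar>s\<bar> < e \<longrightarrow> (g has_real_derivative g' s) (at s)"
    and dg': "(g' has_real_derivative c) (at 0)" and mx: "\<forall>s. \<bar>s\<bar> < e \<longrightarrow> g s \<le> g 0"
    and z: "g' 0 = 0"
  shows "c \<le> 0"
proof (rule ccontr)
  assume "\<not> c \<le> 0"
  then have "c > 0" by simp
  from DERIV_pos_inc_right[OF dg' this] obtain d where d: "d > 0"
    "\<forall>h>0. h < d \<longrightarrow> g' 0 < g' (0 + h)" by blast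
  define h where "h = min d e / 2"
  have h: "0 < h" "h < d" "h < e" using d e by (auto simp: h_def)
  have "\<exists>z. 0 < z \<and> z < h \<and> g h - g 0 = (h - 0) * g' z"
    by (rule MVT2) (use h dg in auto)
  then obtain z where zz: "0 < z" "z < h" "g h - g 0 = h * g' z" by auto
  have "g' z > 0" using d(2) zz h z by auto
  then have "g h > g 0" using zz h by (simp add: algebra_simps)
  moreover have "g h \<le> g 0" using mx h by auto
  ultimately show False by simp
qed

lemma second_order_vec:
  fixes G :: "real^'n \<Rightarrow> real" and DG :: "real^'n \<Rightarrow> real^'n"
  assumes r: "r > 0" and dG: "\<forall>y\<in>ball x r. (G has_derivative (\<lambda>h. DG y \<bullet> h)) (at y)"
    and dDG: "(DG has_derivative L) (at x)" and mx: "\<forall>y\<in>ball x r. G y \<le> G x"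
  shows "DG x = 0 \<and> (\<forall>i. L (axis i 1) $ i \<le> 0)"
proof
  have x: "x \<in> ball x r" using r by simp
  have "(\<lambda>h. DG x \<bullet> h) = (\<lambda>v. 0)"
    by (rule differential_zero_maxmin[OF x open_ball, where f=G]) (use dG x mx in auto)
  then have "DG x \<bullet> DG x = 0" by metis
  then show DG0: "DG x = 0" by simp
  show "\<forall>i. L (axis i 1) $ i \<le> 0"
  proof
    fix i
    define e :: "real^'n" where "e = axis i 1"
    have ne: "norm e = 1" by (simp add: e_def)
    have inb: "x + s *\<^sub>R e \<in> ball x r" if "\<bar>s\<bar> < r" for s
      using that ne by (simp add: dist_norm)
    have lin: "((\<lambda>s::real. x + s *\<^sub>R e) has_derivative (\<lambda>h. h *\<^sub>R e)) (at s)" for s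
      by (auto intro!: derivative_eq_intros)
    show "L (axis i 1) $ i \<le> 0"
    proof (rule second_order_1d[where g = "\<lambda>s. G (x + s *\<^sub>R e)" and g' = "\<lambda>s. DG (x + s *\<^sub>R e) $ i"])
      show "r > 0" by (rule r)
      show "\<forall>s. \<bar>s\<bar> < r \<longrightarrow> ((\<lambda>s. G (x + s *\<^sub>R e)) has_real_derivative DG (x + s *\<^sub>R e) $ i) (at s)"
      proof (intro allI impI)
        fix s :: real assume "\<bar>s\<bar> < r"
        then have "(G has_derivative (\<lambda>h. DG (x + s *\<^sub>R e) \<bullet> h)) (at (x + s *\<^sub>R e))"
          using dG inb by blast
        from has_derivative_compose[OF lin this]
        have "((\<lambda>s. G (x + s *\<^sub>R e)) has_derivative (\<lambda>h. DG (x + s *\<^sub>R e) \<bullet> (h *\<^sub>R e))) (at s)" .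
        moreover have "(\<lambda>h. DG (x + s *\<^sub>R e) \<bullet> (h *\<^sub>R e)) = (*) (DG (x + s *\<^sub>R e) $ i)"
          by (auto simp: fun_eq_iff e_def inner_axis)
        ultimately show "((\<lambda>s. G (x + s *\<^sub>R e)) has_real_derivative DG (x + s *\<^sub>R e) $ i) (at s)"
          by (simp add: has_field_derivative_def)
      qed
      have d1: "(DG has_derivative L) (at (x + 0 *\<^sub>R e))" using dDG by simp
      have "((\<lambda>s. DG (x + s *\<^sub>R e)) has_derivative (\<lambda>h. L (h *\<^sub>R e))) (at 0)"
        using has_derivative_compose[OF lin d1] .
      then have "((\<lambda>s. DG (x + s *\<^sub>R e) $ i) has_derivative (\<lambda>h. L (h *\<^sub>R e) $ i)) (at 0)"
        by (rule bounded_linear.has_derivative[OF bounded_linear_vec_nth])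
      moreover have "(\<lambda>h. L (h *\<^sub>R e) $ i) = (*) (L e $ i)"
        using has_derivative_linear[OF dDG] by (auto simp: fun_eq_iff linear_cmul)
      ultimately show "((\<lambda>s. DG (x + s *\<^sub>R e) $ i) has_real_derivative L (axis i 1) $ i) (at 0)"
        by (simp add: has_field_derivative_def e_def)
      show "\<forall>s. \<bar>s\<bar> < r \<longrightarrow> G (x + s *\<^sub>R e) \<le> G (x + 0 *\<^sub>R e)"
        using mx inb by auto
      show "DG (x + 0 *\<^sub>R e) $ i = 0" using DG0 by simp
    qed
  qed
qed

lemma time_max:
  fixes g :: "real \<Rightarrow> real"
  assumes "(g has_real_derivative c) (at t)" "\<eta> > 0" "\<forall>s. t - \<eta> < s \<and> s \<le> t \<longrightarrow> g s \<le> g t"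
  shows "c \<ge> 0"
proof (rule ccontr)
  assume "\<not> c \<ge> 0"
  then have "c < 0" by simp
  from DERIV_neg_dec_left[OF assms(1) this] obtain d where d: "d > 0" "\<forall>h>0. h < d \<longrightarrow> g t < g (t - h)" by blast
  define h where "h = min d \<eta> / 2"
  have "0 < h" "h < d" "h < \<eta>" using d assms(2) by (auto simp: h_def)
  then show False using d(2) assms(3)[rule_format, of "t - h"] by force
qed



definition phi :: "real \<Rightarrow> real \<Rightarrow> real" where "phi c s = c + s - s^2"
definition Vb :: "real \<Rightarrow> real \<Rightarrow> real" where "Vb c s = ln (phi c s) - ln c"
definition Vd :: "real \<Rightarrow> real \<Rightarrow> real" where "Vd c s = (1 - 2 * s) / phi c s"
definition Vdd :: "real \<Rightarrow> real \<Rightarrow> real" where "Vdd c s = - 2 / phi c s - (Vd c s)^2"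

lemma phi_ge: "0 \<le> s \<Longrightarrow> s \<le> 1 \<Longrightarrow> c \<le> phi c s"
proof -
  assume "0 \<le> s" "s \<le> 1"
  then have "s * s \<le> s * 1" by (intro mult_left_mono) auto
  then show ?thesis unfolding phi_def by (simp add: power2_eq_square)
qed

lemma phi_le: "phi c s \<le> c + 1/4"
proof -
  have "0 \<le> (s - 1/2)^2" by simp
  then show ?thesis unfolding phi_def by (simp add: power2_eq_square algebra_simps)
qed

lemma DERIV_Vb: "phi c s > 0 \<Longrightarrow> DERIV (Vb c) s :> Vd c s"
  unfolding Vb_def Vd_def phi_def
  by (auto intro!: derivative_eq_intros simp: field_simps)

lemma DERIV_Vd: "phi c s > 0 \<Longrightarrow> DERIV (Vd c) s :> Vdd c s"
proof -
  assume p: "phi c s > 0"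
  have d: "DERIV (phi c) s :> 1 - 2 * s" unfolding phi_def
    by (auto intro!: derivative_eq_intros)
  have "DERIV (\<lambda>s. (1 - 2 * s) / phi c s) s :> ((- 2) * phi c s - (1 - 2 * s) * (1 - 2 * s)) / (phi c s * phi c s)"
    using p by (auto intro!: derivative_eq_intros d)
  moreover have "((- 2) * phi c s - (1 - 2 * s) * (1 - 2 * s)) / (phi c s * phi c s) = Vdd c s"
    using p unfolding Vdd_def Vd_def by (simp add: field_simps power2_eq_square)
  ultimately show ?thesis unfolding Vd_def[abs_def] by simp
qed

lemma Vb0: "Vb c 0 = 0" by (simp add: Vb_def phi_def)

lemma Vb_nonneg: "0 < c \<Longrightarrow> 0 \<le> s \<Longrightarrow> s \<le> 1 \<Longrightarrow> 0 \<le> Vb c s"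
  unfolding Vb_def using phi_ge[of s c] by simp

lemma Vb_le: "0 < c \<Longrightarrow> 0 \<le> s \<Longrightarrow> s \<le> 1 \<Longrightarrow> Vb c s \<le> s / c"
proof -
  assume c: "0 < c" and s: "0 \<le> s" "s \<le> 1"
  have p: "phi c s > 0" using phi_ge[OF s, of c] c by simp
  have "Vb c s = ln (phi c s / c)" unfolding Vb_def using p c by (simp add: ln_div)
  also have "\<dots> \<le> phi c s / c - 1" using p c by (intro ln_le_minus_one) simp
  also have "\<dots> = (s - s^2) / c" using c by (simp add: phi_def field_simps)
  also have "\<dots> \<le> s / c" using c by (simp add: divide_right_mono)
  finally show ?thesis .
qed

lemma Vd_bounds: "0 < c \<Longrightarrow> 0 \<le> s \<Longrightarrow> s \<le> 1/2 \<Longrightarrow> 0 \<le> Vd c s \<and> Vd c s \<le> 1 / c"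
proof -
  assume c: "0 < c" and s: "0 \<le> s" "s \<le> 1/2"
  have p: "c \<le> phi c s" using phi_ge[of s c] s by simp
  have "(1 - 2 * s) / phi c s \<le> 1 / phi c s" using p c s by (intro divide_right_mono) auto
  also have "\<dots> \<le> 1 / c" using p c by (intro divide_left_mono) auto
  finally have "(1 - 2 * s) / phi c s \<le> 1 / c" .
  moreover have "0 \<le> (1 - 2 * s) / phi c s" using p c s by (intro divide_nonneg_nonneg) auto
  ultimately show ?thesis unfolding Vd_def by blast
qed

lemma Vdd_bound: "0 < c \<Longrightarrow> c \<le> 1/4 \<Longrightarrow> 0 \<le> s \<Longrightarrow> s \<le> 1 \<Longrightarrow> Vdd c s \<le> -4 - (Vd c s)^2"
proof -
  assume c: "0 < c" "c \<le> 1/4" and s: "0 \<le> s" "s \<le> 1"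
  have p: "0 < phi c s" "phi c s \<le> 1/2" using phi_ge[OF s, of c] phi_le[of c s] c by auto
  have "2 / phi c s \<ge> 4" using p by (simp add: field_simps)
  then show ?thesis unfolding Vdd_def by simp
qed

lemma cont_Vb: assumes c: "0 < c" shows "continuous_on {0..1} (Vb c)"
proof -
  have "\<forall>s\<in>{0..1}. phi c s \<noteq> 0" using phi_ge c by (smt (verit) atLeastAtMost_iff)
  then have "continuous_on {0..1} (\<lambda>s. ln (c + s - s^2) - ln c)"
    by (intro continuous_intros) (auto simp: phi_def)
  then show ?thesis unfolding Vb_def[abs_def] phi_def by simp
qed

lemma closure_Qset: "{x. 0 \<le> x $ k} \<times> {..0::real} \<subseteq> closure (Qset k)"
proof -
  have "halfspace k = {x. axis k 1 \<bullet> x > 0}" by (simp add: halfspace_def inner_axis')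
  then have "closure (halfspace k) = {x. axis k (1::real) \<bullet> x \<ge> 0}"
    by (simp del: closure_halfspace_gt add: closure_halfspace_gt)
  then show ?thesis unfolding Qset_def closure_Times by (simp add: inner_axis')
qed

lemma powr_le_sq: "1 < p \<Longrightarrow> p \<le> 2 \<Longrightarrow> 0 \<le> (x::real) \<Longrightarrow> x powr p \<le> 1 + x^2"
proof -
  assume p: "1 < p" "p \<le> 2" and x: "0 \<le> x"
  show ?thesis
  proof (cases "x \<le> 1")
    case True
    have "x powr p \<le> 1"
    proof (cases "x = 0")
      case True then show ?thesis by simp
    next
      case False
      then have "x powr p \<le> x" using x p \<open>x \<le> 1\<close> by (intro powr_le_one_le) auto
      then show ?thesis using \<open>x \<le> 1\<close> by linarith
    qed
    moreover have "0 \<le> x^2" by simp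
    ultimately show ?thesis by linarith
  next
    case False
    then have "x powr p \<le> x powr 2" using p by (intro powr_mono) auto
    also have "\<dots> = x^2" using False by (simp add: powr_numeral)
    finally show ?thesis by linarith
  qed
qed


lemma compare:
  fixes k :: "'n::finite" and f :: "real^'n \<Rightarrow> real \<Rightarrow> real"
    and ut :: "real^'n \<Rightarrow> real \<Rightarrow> real" and Du :: "real^'n \<Rightarrow> real \<Rightarrow> real^'n"
    and L :: "real^'n \<Rightarrow> real \<Rightarrow> real^'n \<Rightarrow> real^'n"
  assumes p: "1 < p" "p \<le> 2"
    and cont: "continuous_on (closure (Qset k)) (\<lambda>(x,t). f x t)"
    and pde: "\<forall>x t. (x,t) \<in> Qset k \<longrightarrow>
           ((\<lambda>s. f x s) has_real_derivative ut x t) (at t) \<and>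
           ((\<lambda>y. f y t) has_derivative (\<lambda>h. Du x t \<bullet> h)) (at x) \<and>
           ((\<lambda>y. Du y t) has_derivative L x t) (at x) \<and>
           ut x t - (\<Sum>i\<in>UNIV. L x t (axis i 1) $ i) \<le> norm (Du x t) powr p"
    and bd: "\<forall>x t. x $ k = 0 \<and> t < 0 \<longrightarrow> f x t = 0"
    and up: "\<forall>x t. x \<in> Gamma k 1 \<and> t \<le> -\<epsilon> \<longrightarrow> f x t \<le> M"
    and eps: "\<epsilon> > 0" and M: "M \<ge> 0" and c: "0 < c" "c \<le> 1/4" and cM: "M \<le> Vb c (1/2)"
  shows "\<forall>x t. 0 < x $ k \<and> x $ k \<le> 1/2 \<and> t \<le> -\<epsilon> \<longrightarrow> f x t \<le> Vb c (x $ k)"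
proof (intro allI impI, rule ccontr)
  fix x0 t0
  assume 0: "0 < x0 $ k \<and> x0 $ k \<le> 1/2 \<and> t0 \<le> -\<epsilon>" and "\<not> f x0 t0 \<le> Vb c (x0 $ k)"
  define \<theta> where "\<theta> = f x0 t0 - Vb c (x0 $ k)"
  have th: "\<theta> > 0" using \<open>\<not> f x0 t0 \<le> Vb c (x0 $ k)\<close> by (simp add: \<theta>_def)
  define N where "N = real CARD('n)"
  define B where "B = 1 + 2 * N + 2 / c + 4 * M"
  have N0: "N \<ge> 0" by (simp add: N_def)
  have "2 / c > 0" using c by simp
  then have B: "B > 0" using M N0 unfolding B_def by linarith
  define A where "A = x0 \<bullet> x0 - t0"
  have A: "A > 0" using 0 eps by (simp add: A_def) (smt (verit) inner_ge_zero)
  define \<delta> where "\<delta> = min (1 / B) (\<theta> / (2 * A))"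
  have dpos: "\<delta> > 0" using B A th by (simp add: \<delta>_def)
  have dB: "\<delta> * B \<le> 1" using B by (simp add: \<delta>_def min_def field_simps)
  have dA: "\<delta> * A \<le> \<theta> / 2" using A by (simp add: \<delta>_def min_def field_simps)
  define w where "w = (\<lambda>z::(real^'n)\<times>real. f (fst z) (snd z) - Vb c (fst z $ k) - \<delta> * (fst z \<bullet> fst z) + \<delta> * snd z)"
  define R where "R = sqrt (M / \<delta>) + norm x0 + 1"
  define T where "T = t0 - M / \<delta> - 1"
  define K :: "((real^'n) \<times> real) set" where "K = (cball 0 R \<inter> {x. 0 \<le> x $ k} \<inter> {x. x $ k \<le> 1/2}) \<times> {T..-\<epsilon>}"
  have Md: "0 \<le> M / \<delta>" using M dpos by simp
  have x0K: "(x0, t0) \<in> K" using 0 Md by (auto simp: K_def R_def T_def)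
  have cl: "closed {x::real^'n. 0 \<le> x $ k}" "closed {x::real^'n. x $ k \<le> 1/2}"
    by (auto intro!: closed_Collect_le continuous_intros)
  have Kc: "compact K" unfolding K_def
    by (intro compact_Times compact_Int_closed closed_Int cl) auto
  have KQ: "K \<subseteq> closure (Qset k)"
    using closure_Qset[of k] eps by (auto simp: K_def)
  have Ksub: "fst z $ k \<in> {0..1}" if "z \<in> K" for z using that by (auto simp: K_def)
  have wc: "continuous_on K w"
  proof -
    have f1: "continuous_on K (\<lambda>z. f (fst z) (snd z))"
      using continuous_on_subset[OF cont KQ] by (simp add: case_prod_unfold)
    have v1: "continuous_on K (\<lambda>z. Vb c (fst z $ k))"
      by (rule continuous_on_compose2[OF cont_Vb[OF c(1)]]) (auto intro!: continuous_intros Ksub)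
    show ?thesis unfolding w_def by (intro continuous_intros f1 v1)
  qed
  obtain z1 where z1K: "z1 \<in> K" and z1max: "\<forall>y\<in>K. w y \<le> w z1"
    using continuous_attains_sup[OF Kc _ wc] x0K by blast
  obtain x1 t1 where z1: "z1 = (x1, t1)" by (cases z1)
  have "w (x0, t0) = \<theta> - \<delta> * A" by (simp add: w_def \<theta>_def A_def algebra_simps)
  then have wpos: "w (x1, t1) > 0" using z1max x0K dA th z1 by force
  have x1K: "0 \<le> x1 $ k" "x1 $ k \<le> 1/2" "norm x1 \<le> R" "T \<le> t1" "t1 \<le> -\<epsilon>"
    using z1K z1 by (auto simp: K_def)

  have t1neg: "t1 < 0" using x1K eps by simp
  have fM: "f x1 t1 \<le> M"
  proof (cases "x1 $ k = 0")
    case True then show ?thesis using bd t1neg M by simp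
  next
    case False then show ?thesis using up x1K by (auto simp: Gamma_def)
  qed
  have Vnn: "0 \<le> Vb c (x1 $ k)" using Vb_nonneg[OF c(1)] x1K by simp
  have q0: "0 \<le> x1 \<bullet> x1" by simp
  have wexp: "w (x1, t1) = f x1 t1 - Vb c (x1 $ k) - \<delta> * (x1 \<bullet> x1) + \<delta> * t1" by (simp add: w_def)
  have dq0: "0 \<le> \<delta> * (x1 \<bullet> x1)" using dpos q0 by simp
  have dt1: "\<delta> * t1 < 0" using dpos t1neg by (simp add: mult_pos_neg)
  have dq: "\<delta> * (x1 \<bullet> x1) < M" using wpos wexp fM Vnn dt1 by linarith
  have dt: "- (\<delta> * t1) < M" using wpos wexp fM Vnn dq0 by linarith
  have qM: "x1 \<bullet> x1 < M / \<delta>" using dq dpos by (simp add: field_simps)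
  have "norm x1 < sqrt (M / \<delta>)"
    by (rule real_less_rsqrt) (use qM in \<open>simp add: power2_norm_eq_inner\<close>)
  moreover have "0 \<le> norm x0" by simp
  ultimately have nR: "norm x1 < R" unfolding R_def by linarith
  have "- t1 < M / \<delta>" using dt dpos by (simp add: field_simps)
  then have Tt: "T < t1" using 0 eps by (simp add: T_def)
  have xk0: "x1 $ k \<noteq> 0"
  proof
    assume h: "x1 $ k = 0"
    then have "f x1 t1 = 0" using bd t1neg by simp
    then show False using wpos wexp h dq0 dt1 by (simp add: Vb0)
  qed
  have xk1: "x1 $ k \<noteq> 1/2"
  proof
    assume h: "x1 $ k = 1/2"
    then have "Vb c (x1 $ k) = Vb c (1/2)" by (rule arg_cong)
    then show False using wpos wexp fM cM dq0 dt1 by linarith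
  qed
  have a: "0 < x1 $ k" "x1 $ k < 1/2" using x1K xk0 xk1 by auto
  define r where "r = min (x1 $ k) (min (1/2 - x1 $ k) (R - norm x1))"
  have r: "r > 0" using a nR by (simp add: r_def)
  have inball: "0 < y $ k \<and> y $ k < 1/2 \<and> norm y < R" if "y \<in> ball x1 r" for y
  proof -
    have d: "norm (y - x1) < r" using that by (simp add: dist_norm norm_minus_commute)
    have "\<bar>(y - x1) $ k\<bar> \<le> norm (y - x1)" by (rule component_le_norm_cart)
    moreover have "norm y \<le> norm x1 + norm (y - x1)" by (metis add.commute diff_add_cancel norm_triangle_ineq)
    ultimately show ?thesis using d by (auto simp: r_def)
  qed
  have yK: "(y, t1) \<in> K" if "y \<in> ball x1 r" for y
    using inball[OF that] x1K by (auto simp: K_def)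
  have yQ: "(y, t1) \<in> Qset k" if "y \<in> ball x1 r" for y
    using inball[OF that] t1neg by (auto simp: Qset_def halfspace_def)
  have dVb: "((\<lambda>y. Vb c (y $ k)) has_derivative (\<lambda>h. Vd c (y $ k) * h $ k)) (at y)"
    if "0 < y $ k" "y $ k < 1/2" for y :: "real^'n"
  proof -
    have "phi c (y $ k) > 0" using phi_ge[of "y $ k" c] that c by simp
    then have "(Vb c has_derivative (*) (Vd c (y $ k))) (at (y $ k))"
      using DERIV_Vb by (simp add: has_field_derivative_def)
    from has_derivative_compose[OF bounded_linear_imp_has_derivative[OF bounded_linear_vec_nth] this]
    show ?thesis by simp
  qed
  have dVd: "((\<lambda>y. Vd c (y $ k)) has_derivative (\<lambda>h. Vdd c (y $ k) * h $ k)) (at y)"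
    if "0 < y $ k" "y $ k < 1/2" for y :: "real^'n"
  proof -
    have "phi c (y $ k) > 0" using phi_ge[of "y $ k" c] that c by simp
    then have "(Vd c has_derivative (*) (Vdd c (y $ k))) (at (y $ k))"
      using DERIV_Vd by (simp add: has_field_derivative_def)
    from has_derivative_compose[OF bounded_linear_imp_has_derivative[OF bounded_linear_vec_nth] this]
    show ?thesis by simp
  qed
  define G where "G = (\<lambda>y. f y t1 - Vb c (y $ k) - \<delta> * (y \<bullet> y))"
  define DG where "DG = (\<lambda>y. Du y t1 - Vd c (y $ k) *\<^sub>R axis k 1 - (2 * \<delta>) *\<^sub>R y)"
  define L' where "L' = (\<lambda>h. L x1 t1 h - (Vdd c (x1 $ k) * h $ k) *\<^sub>R axis k (1::real) - (2 * \<delta>) *\<^sub>R h)"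
  have dG: "\<forall>y\<in>ball x1 r. (G has_derivative (\<lambda>h. DG y \<bullet> h)) (at y)"
  proof
    fix y assume y: "y \<in> ball x1 r"
    have d1: "((\<lambda>y. f y t1) has_derivative (\<lambda>h. Du y t1 \<bullet> h)) (at y)" using pde yQ[OF y] by blast
    have d2: "((\<lambda>y. Vb c (y $ k)) has_derivative (\<lambda>h. Vd c (y $ k) * h $ k)) (at y)"
      using dVb inball[OF y] by blast
    have d3: "((\<lambda>y. \<delta> * (y \<bullet> y)) has_derivative (\<lambda>h. \<delta> * (y \<bullet> h + h \<bullet> y))) (at y)"
      by (intro has_derivative_mult_right has_derivative_inner has_derivative_ident)
    have "(G has_derivative (\<lambda>h. Du y t1 \<bullet> h - Vd c (y $ k) * h $ k - \<delta> * (y \<bullet> h + h \<bullet> y))) (at y)"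
      unfolding G_def by (intro has_derivative_diff d1 d2 d3)
    moreover have "(\<lambda>h. Du y t1 \<bullet> h - Vd c (y $ k) * h $ k - \<delta> * (y \<bullet> h + h \<bullet> y)) = (\<lambda>h. DG y \<bullet> h)"
      by (auto simp: fun_eq_iff DG_def inner_diff_left inner_axis' inner_axis inner_commute algebra_simps)
    ultimately show "(G has_derivative (\<lambda>h. DG y \<bullet> h)) (at y)" by simp
  qed
  have x1b: "x1 \<in> ball x1 r" using r by simp
  have dDG: "(DG has_derivative L') (at x1)"
  proof -
    have d1: "((\<lambda>y. Du y t1) has_derivative L x1 t1) (at x1)" using pde yQ[OF x1b] by blast
    have d2: "((\<lambda>y. Vd c (y $ k) *\<^sub>R axis k (1::real)) has_derivative (\<lambda>h. (Vdd c (x1 $ k) * h $ k) *\<^sub>R axis k 1)) (at x1)"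
      using has_derivative_scaleR_left[OF dVd[OF a]] .
    have d3: "((\<lambda>y. (2 * \<delta>) *\<^sub>R y) has_derivative (\<lambda>h. (2 * \<delta>) *\<^sub>R h)) (at x1)"
      by (intro has_derivative_scaleR_right has_derivative_ident)
    show ?thesis unfolding DG_def L'_def by (intro has_derivative_diff d1 d2 d3)
  qed
  have Gmax: "\<forall>y\<in>ball x1 r. G y \<le> G x1"
  proof
    fix y assume y: "y \<in> ball x1 r"
    have "w (y, t1) \<le> w (x1, t1)" using z1max yK[OF y] z1 by simp
    then show "G y \<le> G x1" by (simp add: w_def G_def)
  qed
  from second_order_vec[OF r dG dDG Gmax]
  have DG0: "DG x1 = 0" and Lneg: "\<forall>i. L' (axis i 1) $ i \<le> 0" by auto
  have Du1: "Du x1 t1 = Vd c (x1 $ k) *\<^sub>R axis k 1 + (2 * \<delta>) *\<^sub>R x1"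
    using DG0 by (simp add: DG_def algebra_simps)
  have Li: "L x1 t1 (axis i 1) $ i \<le> (if i = k then Vdd c (x1 $ k) else 0) + 2 * \<delta>" for i
    using Lneg[rule_format, of i] by (auto simp: L'_def axis_def)
  have trace: "(\<Sum>i\<in>UNIV. L x1 t1 (axis i 1) $ i) \<le> Vdd c (x1 $ k) + 2 * (\<delta> * N)"
  proof -
    have "(\<Sum>i\<in>UNIV. L x1 t1 (axis i 1) $ i) \<le> (\<Sum>i\<in>UNIV. (if i = k then Vdd c (x1 $ k) else 0) + 2 * \<delta>)"
      by (rule sum_mono) (rule Li)
    also have "\<dots> = Vdd c (x1 $ k) + 2 * (\<delta> * N)"
      by (simp add: sum.distrib N_def algebra_simps)
    finally show ?thesis .
  qed
  have dtime: "((\<lambda>s. f x1 s + \<delta> * s) has_real_derivative ut x1 t1 + \<delta>) (at t1)"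
  proof -
    have "((\<lambda>s. f x1 s) has_real_derivative ut x1 t1) (at t1)" using pde yQ[OF x1b] by blast
    then show ?thesis by (auto intro!: derivative_eq_intros)
  qed
  have utb: "ut x1 t1 + \<delta> \<ge> 0"
  proof (rule time_max[OF dtime])
    show "t1 - T > 0" using Tt by simp
    show "\<forall>s. t1 - (t1 - T) < s \<and> s \<le> t1 \<longrightarrow> f x1 s + \<delta> * s \<le> f x1 t1 + \<delta> * t1"
    proof (intro allI impI)
      fix s assume s: "t1 - (t1 - T) < s \<and> s \<le> t1"
      then have "(x1, s) \<in> K" using x1K by (auto simp: K_def)
      then have "w (x1, s) \<le> w (x1, t1)" using z1max z1 by simp
      then show "f x1 s + \<delta> * s \<le> f x1 t1 + \<delta> * t1" by (simp add: w_def)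
    qed
  qed
  have eq: "ut x1 t1 - (\<Sum>i\<in>UNIV. L x1 t1 (axis i 1) $ i) \<le> norm (Du x1 t1) powr p"
    using pde yQ[OF x1b] by blast
  also have "\<dots> \<le> 1 + (norm (Du x1 t1))^2" by (rule powr_le_sq[OF p]) simp
  finally have main: "ut x1 t1 - (\<Sum>i\<in>UNIV. L x1 t1 (axis i 1) $ i) \<le> 1 + (norm (Du x1 t1))^2" .
  define v where "v = Vd c (x1 $ k)"
  define aa where "aa = x1 $ k"
  define q where "q = x1 \<bullet> x1"
  have nDu: "(norm (Du x1 t1))^2 = v^2 + 4 * (\<delta> * (v * aa)) + 4 * (\<delta> * (\<delta> * q))"
  proof -
    have "(norm (Du x1 t1))^2 = Du x1 t1 \<bullet> Du x1 t1" by (simp add: power2_norm_eq_inner)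
    also have "\<dots> = v^2 + 4 * (\<delta> * (v * aa)) + 4 * (\<delta> * (\<delta> * q))"
      unfolding Du1 v_def[symmetric] by (simp add: inner_add_left inner_add_right inner_axis' inner_axis
        inner_commute algebra_simps power2_eq_square aa_def q_def)
    finally show ?thesis .
  qed
  have vb: "0 \<le> v" "v \<le> 1 / c" using Vd_bounds[OF c(1), of aa] a by (auto simp: v_def aa_def)
  have "v * aa \<le> (1/c) * (1/2)" using vb a c by (intro mult_mono) (auto simp: aa_def)
  then have t2: "\<delta> * (v * aa) \<le> \<delta> * ((1/c) * (1/2))" using dpos by (intro mult_left_mono) auto
  have t3: "\<delta> * (\<delta> * q) \<le> \<delta> * M" using dq dpos by (intro mult_left_mono) (auto simp: q_def)
  have Vdd: "Vdd c (x1 $ k) \<le> -4 - v^2" using Vdd_bound[OF c, of "x1 $ k"] a by (simp add: v_def)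
  have dBe: "\<delta> * B = \<delta> + 2 * (\<delta> * N) + 4 * (\<delta> * ((1/c) * (1/2))) + 4 * (\<delta> * M)"
    by (simp add: B_def algebra_simps)
  show False using main nDu t2 t3 Vdd trace utb dB dBe by linarith
qed


theorem lemma5p6:
  fixes p M1 :: real
  assumes "1 < p" and "p \<le> 2"
  shows "\<exists>C>0. \<forall>(k::'n::finite) (u :: real^'n \<Rightarrow> real \<Rightarrow> real) (\<epsilon>::real).
           \<epsilon> > 0 \<and> ancient_sol k p u \<and>
           bdd_above ((\<lambda>(x,t). \<bar>u x t\<bar>) ` (Gamma k 1 \<times> {..-\<epsilon>})) \<and>
           (SUP z\<in>Gamma k 1 \<times> {..-\<epsilon>}. \<bar>u (fst z) (snd z)\<bar>) = M1
           \<longrightarrow> (\<forall>x t. x \<in> Gamma k 1 \<and> t \<le> -\<epsilon> \<longrightarrow> \<bar>u x t\<bar> \<le> C * x $ k)"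
proof -
  have p: "1 < p" "p \<le> 2" by fact+
  define M where "M = max M1 0"
  define c where "c = exp (- M) / 4"
  define C where "C = max (1 / c) (2 * M)"
  have M: "0 \<le> M" "M1 \<le> M" by (auto simp: M_def)
  have c0: "0 < c" by (simp add: c_def)
  have c1: "c \<le> 1/4" using M by (simp add: c_def)
  have C0: "C > 0" using c0 unfolding C_def by (simp add: less_max_iff_disj)
  have cM: "M \<le> Vb c (1/2)"
  proof -
    have "ln (1/4) \<le> ln (c + 1/4)" using c0 by simp
    moreover have "ln c = - M + ln (1/4)" unfolding c_def by (simp add: ln_div ln_mult)
    ultimately show ?thesis by (simp add: Vb_def phi_def power2_eq_square add.commute)
  qed
  show ?thesis
  proof (intro exI[of _ C] conjI C0 allI impI)
    fix k :: 'n and u :: "real^'n \<Rightarrow> real \<Rightarrow> real" and \<epsilon> :: real and x t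
    assume H: "\<epsilon> > 0 \<and> ancient_sol k p u \<and>
           bdd_above ((\<lambda>(x,t). \<bar>u x t\<bar>) ` (Gamma k 1 \<times> {..-\<epsilon>})) \<and>
           (SUP z\<in>Gamma k 1 \<times> {..-\<epsilon>}. \<bar>u (fst z) (snd z)\<bar>) = M1"
      and xt: "x \<in> Gamma k 1 \<and> t \<le> -\<epsilon>"
    have eps: "\<epsilon> > 0" using H by blast
    have bdd: "bdd_above ((\<lambda>z. \<bar>u (fst z) (snd z)\<bar>) ` (Gamma k 1 \<times> {..-\<epsilon>}))"
      using H by (simp add: case_prod_unfold)
    have Sb: "\<bar>u y s\<bar> \<le> M" if "y \<in> Gamma k 1 \<and> s \<le> -\<epsilon>" for y s
    proof -
      have "\<bar>u (fst (y,s)) (snd (y,s))\<bar> \<le> (SUP z\<in>Gamma k 1 \<times> {..-\<epsilon>}. \<bar>u (fst z) (snd z)\<bar>)"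
        by (rule cSUP_upper[OF _ bdd]) (use that in auto)
      then show ?thesis using H M by simp
    qed
    obtain ut Du D2 where cont: "continuous_on (closure (Qset k)) (\<lambda>(x,t). u x t)"
      and pde0: "\<forall>x t. (x,t) \<in> Qset k \<longrightarrow>
           ((\<lambda>s. u x s) has_real_derivative ut x t) (at t) \<and>
           ((\<lambda>y. u y t) has_derivative (\<lambda>h. Du x t \<bullet> h)) (at x) \<and>
           ((\<lambda>y. Du y t) has_derivative (\<lambda>h. D2 x t *v h)) (at x) \<and>
           ut x t - (\<Sum>i\<in>UNIV. D2 x t $ i $ i) = norm (Du x t) powr p"
      and bd: "\<forall>x t. x $ k = 0 \<and> t < 0 \<longrightarrow> u x t = 0"
      using H unfolding ancient_sol_def by blast
    have tr: "(\<Sum>i\<in>UNIV. (D2 y s *v axis i 1) $ i) = (\<Sum>i\<in>UNIV. D2 y s $ i $ i)" for y s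
      by (simp add: matrix_vector_mult_basis column_def)
    have up1: "u x t \<le> Vb c (x $ k)" if "0 < x $ k \<and> x $ k \<le> 1/2 \<and> t \<le> -\<epsilon>" for x t
    proof -
      have "\<forall>x t. 0 < x $ k \<and> x $ k \<le> 1/2 \<and> t \<le> -\<epsilon> \<longrightarrow> u x t \<le> Vb c (x $ k)"
      proof (rule compare[OF p cont, where ut = ut and Du = Du and L = "\<lambda>x t h. D2 x t *v h"])
        show "\<forall>x t. (x, t) \<in> Qset k \<longrightarrow>
           ((\<lambda>s. u x s) has_real_derivative ut x t) (at t) \<and>
           ((\<lambda>y. u y t) has_derivative (\<lambda>h. Du x t \<bullet> h)) (at x) \<and>
           ((\<lambda>y. Du y t) has_derivative (\<lambda>h. D2 x t *v h)) (at x) \<and>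
           ut x t - (\<Sum>i\<in>UNIV. (D2 x t *v axis i 1) $ i) \<le> norm (Du x t) powr p"
          using pde0 tr by simp
        show "\<forall>x t. x \<in> Gamma k 1 \<and> t \<le> -\<epsilon> \<longrightarrow> u x t \<le> M"
          using Sb by (meson abs_ge_self order.trans)
      qed (simp_all add: bd eps M(1) c0 c1 c1[simplified] cM)
      then show ?thesis using that by blast
    qed
    have up2: "- u x t \<le> Vb c (x $ k)" if "0 < x $ k \<and> x $ k \<le> 1/2 \<and> t \<le> -\<epsilon>" for x t
    proof -
      have cont': "continuous_on (closure (Qset k)) (\<lambda>(x,t). - u x t)"
        using continuous_on_minus[OF cont] by (simp add: case_prod_unfold)
      have "\<forall>x t. 0 < x $ k \<and> x $ k \<le> 1/2 \<and> t \<le> -\<epsilon> \<longrightarrow> - u x t \<le> Vb c (x $ k)"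
      proof (rule compare[OF p cont', where ut = "\<lambda>x t. - ut x t" and Du = "\<lambda>x t. - Du x t"
            and L = "\<lambda>x t h. - (D2 x t *v h)"])
        show "\<forall>x t. (x, t) \<in> Qset k \<longrightarrow>
           ((\<lambda>s. - u x s) has_real_derivative - ut x t) (at t) \<and>
           ((\<lambda>y. - u y t) has_derivative (\<lambda>h. - Du x t \<bullet> h)) (at x) \<and>
           ((\<lambda>y. - Du y t) has_derivative (\<lambda>h. - (D2 x t *v h))) (at x) \<and>
           - ut x t - (\<Sum>i\<in>UNIV. (- (D2 x t *v axis i 1)) $ i) \<le> norm (- Du x t) powr p"
        proof (intro allI impI conjI)
          fix y s assume ys: "(y, s) \<in> Qset k"
          note P = pde0[rule_format, OF ys]
          show "((\<lambda>s. - u y s) has_real_derivative - ut y s) (at s)"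
            using P by (intro DERIV_minus) blast
          have "((\<lambda>y. - u y s) has_derivative (\<lambda>h. - (Du y s \<bullet> h))) (at y)"
            using P by (intro has_derivative_minus) blast
          then show "((\<lambda>y. - u y s) has_derivative (\<lambda>h. - Du y s \<bullet> h)) (at y)" by simp
          show "((\<lambda>y. - Du y s) has_derivative (\<lambda>h. - (D2 y s *v h))) (at y)"
            using P by (intro has_derivative_minus) blast
          have "- ut y s - (\<Sum>i\<in>UNIV. (- (D2 y s *v axis i 1)) $ i) = - (ut y s - (\<Sum>i\<in>UNIV. D2 y s $ i $ i))"
            using tr[of y s] by (simp add: sum_negf)
          also have "\<dots> = - (norm (Du y s) powr p)" using P by simp
          also have "\<dots> \<le> norm (- Du y s) powr p" by simp
          finally show "- ut y s - (\<Sum>i\<in>UNIV. (- (D2 y s *v axis i 1)) $ i) \<le> norm (- Du y s) powr p" .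
        qed
        show "\<forall>x t. x \<in> Gamma k 1 \<and> t \<le> -\<epsilon> \<longrightarrow> - u x t \<le> M"
          using Sb by (meson abs_ge_minus_self order.trans)
      qed (simp_all add: bd eps M(1) c0 c1 c1[simplified] cM)
      then show ?thesis using that by blast
    qed
    have xk: "0 < x $ k" "x $ k < 1" using xt by (auto simp: Gamma_def)
    show "\<bar>u x t\<bar> \<le> C * x $ k"
    proof (cases "x $ k \<le> 1/2")
      case True
      have "\<bar>u x t\<bar> \<le> Vb c (x $ k)" using up1 up2 xk xt True by (simp add: abs_le_iff)
      also have "\<dots> \<le> x $ k / c" using Vb_le[OF c0, of "x $ k"] xk by simp
      also have "\<dots> = (1/c) * x $ k" by simp
      also have "\<dots> \<le> C * x $ k" using xk by (intro mult_right_mono) (auto simp: C_def)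
      finally show ?thesis .
    next
      case False
      have "\<bar>u x t\<bar> \<le> M" using Sb xt by blast
      also have "\<dots> = M * 1" by simp
      also have "\<dots> \<le> M * (2 * x $ k)" using False M by (intro mult_left_mono) auto
      also have "\<dots> = (2 * M) * x $ k" by simp
      also have "\<dots> \<le> C * x $ k" using xk by (intro mult_right_mono) (auto simp: C_def)
      finally show ?thesis .
    qed
  qed
qed

end
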